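(* Let $n\ge 2$ and let $A=(a_{pq})\in\mathbb{R}^{n\times n}$ be the weighted adjacency matrix of a directed stem-bud network without self-loops, i.e., there is $y\in\{1,\dots,n-1\}$ such that $a_{pq}=0$ unless $(p,q)=(q+1,q)$ for some $q\in\{1,\dots,n-1\}$ or $(p,q)=(y,n)$ (this includes the directed line network, where also $a_{yn}=0$). Let $i_b\in\{1,\dots,n\}$, $b=e_{i_b}$, and let $T$ be a positive integer. Then the controllability Gramian $\mathcal{W}_{i_b}=\sum_{t=0}^{T-1}A^tbb^{\top}(A^t)^{\top}$ is a diagonal matrix.
   Context: $e_p$ denotes the $p$-th canonical unit vector in $\mathbb{R}^n$. In a directed stem-bud network the stem is the path $1\to2\to\cdots\to y$ and the bud is the cycle $y\to y+1\to\cdots\to n\to y$; the entry $a_{pq}$ is the weight of the edge $q\to p$. *)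

theory Defs
  imports Main "HOL-Analysis.Analysis"
begin

text \<open>n x n real matrices are represented as functions nat => nat => real,
  with indices ranging over {1..n} (entries outside are irrelevant).\<close>

definition mat_mult :: "nat \<Rightarrow> (nat \<Rightarrow> nat \<Rightarrow> real) \<Rightarrow> (nat \<Rightarrow> nat \<Rightarrow> real) \<Rightarrow> (nat \<Rightarrow> nat \<Rightarrow> real)" where
  "mat_mult n A B = (\<lambda>p q. \<Sum>k=1..n. A p k * B k q)"

definition mat_id :: "nat \<Rightarrow> nat \<Rightarrow> real" where
  "mat_id = (\<lambda>p q. if p = q then 1 else 0)"

fun mat_pow :: "nat \<Rightarrow> (nat \<Rightarrow> nat \<Rightarrow> real) \<Rightarrow> nat \<Rightarrow> (nat \<Rightarrow> nat \<Rightarrow> real)" where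
  "mat_pow n A 0 = mat_id"
| "mat_pow n A (Suc t) = mat_mult n (mat_pow n A t) A"

definition mat_transpose :: "(nat \<Rightarrow> nat \<Rightarrow> real) \<Rightarrow> (nat \<Rightarrow> nat \<Rightarrow> real)" where
  "mat_transpose A = (\<lambda>p q. A q p)"

definition unit_vec :: "nat \<Rightarrow> nat \<Rightarrow> real" where
  "unit_vec i = (\<lambda>p. if p = i then 1 else 0)"

definition outer :: "(nat \<Rightarrow> real) \<Rightarrow> (nat \<Rightarrow> real) \<Rightarrow> (nat \<Rightarrow> nat \<Rightarrow> real)" where
  "outer u v = (\<lambda>p q. u p * v q)"

definition ctrb_gramian :: "nat \<Rightarrow> (nat \<Rightarrow> nat \<Rightarrow> real) \<Rightarrow> (nat \<Rightarrow> real) \<Rightarrow> nat \<Rightarrow> (nat \<Rightarrow> nat \<Rightarrow> real)" where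
  "ctrb_gramian n A b T = (\<lambda>p q. \<Sum>t<T.
      mat_mult n (mat_mult n (mat_pow n A t) (outer b b)) (mat_transpose (mat_pow n A t)) p q)"

definition is_diagonal :: "nat \<Rightarrow> (nat \<Rightarrow> nat \<Rightarrow> real) \<Rightarrow> bool" where
  "is_diagonal n M \<longleftrightarrow> (\<forall>p\<in>{1..n}. \<forall>q\<in>{1..n}. p \<noteq> q \<longrightarrow> M p q = 0)"

definition stem_bud :: "nat \<Rightarrow> nat \<Rightarrow> (nat \<Rightarrow> nat \<Rightarrow> real) \<Rightarrow> bool" where
  "stem_bud n y A \<longleftrightarrow> y \<in> {1..n-1} \<and>
     (\<forall>p\<in>{1..n}. \<forall>q\<in>{1..n}. \<not> ((p = q + 1 \<and> q \<in> {1..n-1}) \<or> (p = y \<and> q = n)) \<longrightarrow> A p q = 0)"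

end

theory Submission
  imports Defs
begin

lemma col_supp:
  assumes "stem_bud n y A" "q \<in> {1..n}" "k \<in> {1..n}"
    "k \<noteq> (if q < n then q + 1 else y)"
  shows "A k q = 0"
  using assms unfolding stem_bud_def by (auto split: if_splits)

lemma sum_unit:
  assumes "ib \<in> {1..n}"
  shows "(\<Sum>k\<in>{1..n}. f k * unit_vec ib k) = (f ib :: real)"
proof -
  have "(\<Sum>k\<in>{1..n}. f k * unit_vec ib k) = (\<Sum>k\<in>{1..n}. if k = ib then f k else 0)"
    by (rule sum.cong) (auto simp: unit_vec_def)
  also have "\<dots> = f ib" using assms by (simp add: sum.delta')
  finally show ?thesis .
qed

lemma pow_col:
  assumes "stem_bud n y A" "q \<in> {1..n}"
  shows "\<exists>r. \<forall>p\<in>{1..n}. p \<noteq> r \<longrightarrow> mat_pow n A t p q = 0"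
  using assms(2)
proof (induction t arbitrary: q)
  case 0
  then show ?case by (auto simp: mat_id_def)
next
  case (Suc t)
  define s where "s = (if q < n then q + 1 else y)"
  have s: "s \<in> {1..n}" using Suc.prems assms(1) unfolding s_def stem_bud_def by auto
  obtain r where r: "\<forall>p\<in>{1..n}. p \<noteq> r \<longrightarrow> mat_pow n A t p s = 0"
    using Suc.IH[OF s] by blast
  have eq: "mat_pow n A (Suc t) p q = mat_pow n A t p s * A s q" for p
  proof -
    have "mat_pow n A (Suc t) p q = (\<Sum>k\<in>{1..n}. mat_pow n A t p k * A k q)"
      by (simp add: mat_mult_def)
    also have "\<dots> = mat_pow n A t p s * A s q"
    proof -
      have "(\<Sum>k\<in>{1..n} - {s}. mat_pow n A t p k * A k q) = 0"
        using col_supp[OF assms(1) Suc.prems] s_def by (intro sum.neutral) auto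
      moreover have "(\<Sum>k\<in>{1..n}. mat_pow n A t p k * A k q) = mat_pow n A t p s * A s q
          + (\<Sum>k\<in>{1..n} - {s}. mat_pow n A t p k * A k q)"
        by (rule sum.remove[OF _ s]) simp
      ultimately show ?thesis by simp
    qed
    finally show ?thesis .
  qed
  show ?case using r eq by auto
qed

theorem proposition4p1:
  fixes n y ib T :: nat and A :: "nat \<Rightarrow> nat \<Rightarrow> real"
  assumes "n \<ge> 2"
    and "stem_bud n y A"
    and "ib \<in> {1..n}"
    and "T > 0"
  shows "is_diagonal n (ctrb_gramian n A (unit_vec ib) T)"
  unfolding is_diagonal_def
proof (intro ballI impI)
  fix p q assume p: "p \<in> {1..n}" and q: "q \<in> {1..n}" and pq: "p \<noteq> q"
  have trm: "mat_mult n (mat_mult n (mat_pow n A t) (outer (unit_vec ib) (unit_vec ib)))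
      (mat_transpose (mat_pow n A t)) p q = mat_pow n A t p ib * mat_pow n A t q ib" for t
  proof -
    have "mat_mult n (mat_pow n A t) (outer (unit_vec ib) (unit_vec ib)) p k
        = mat_pow n A t p ib * unit_vec ib k" for k
    proof -
      have "mat_mult n (mat_pow n A t) (outer (unit_vec ib) (unit_vec ib)) p k
        = (\<Sum>j\<in>{1..n}. (mat_pow n A t p j * unit_vec ib k) * unit_vec ib j)"
        unfolding mat_mult_def outer_def by (rule sum.cong) auto
      then show ?thesis using sum_unit[OF assms(3)] by simp
    qed
    then have "mat_mult n (mat_mult n (mat_pow n A t) (outer (unit_vec ib) (unit_vec ib)))
      (mat_transpose (mat_pow n A t)) p q = (\<Sum>k\<in>{1..n}. (mat_pow n A t p ib * mat_pow n A t q k) * unit_vec ib k)"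
      unfolding mat_mult_def mat_transpose_def by (intro sum.cong) auto
    then show ?thesis using sum_unit[OF assms(3)] by simp
  qed
  have "mat_pow n A t p ib * mat_pow n A t q ib = 0" for t
  proof -
    obtain r where "\<forall>p\<in>{1..n}. p \<noteq> r \<longrightarrow> mat_pow n A t p ib = 0"
      using pow_col[OF assms(2,3)] by blast
    then show ?thesis using p q pq by (cases "p = r") auto
  qed
  then show "ctrb_gramian n A (unit_vec ib) T p q = 0"
    unfolding ctrb_gramian_def trm by (intro sum.neutral) blast
qed

end
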